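(* Let $p$ be any of the following patterns, or any pattern in the same symmetry class as one of them: $(123,\{0\},\{0,1,2\})$, $(123,\{0\},\{0,1,3\})$, $(123,\{0\},\{0,2,3\})$, $(123,\{0\},\{1,2,3\})$, $(123,\{1\},\{0,1,2\})$, $(123,\{1\},\{0,1,3\})$, $(123,\{1\},\{0,2,3\})$, $(123,\{1\},\{1,2,3\})$, $(132,\{0\},\{0,1,2\})$, $(132,\{0\},\{0,1,3\})$, $(132,\{0\},\{0,2,3\})$, $(132,\{0\},\{1,2,3\})$, $(132,\{1\},\{0,1,2\})$, $(132,\{1\},\{0,1,3\})$, $(132,\{1\},\{0,2,3\})$, $(132,\{1\},\{1,2,3\})$, $(132,\{2\},\{0,1,2\})$, $(132,\{2\},\{0,1,3\})$, $(132,\{2\},\{0,2,3\})$, $(132,\{2\},\{1,2,3\})$, $(132,\{0,1,2\},\{3\})$, $(132,\{3\},\{0,1,3\})$, $(132,\{3\},\{0,2,3\})$, $(132,\{3\},\{1,2,3\})$. Then for all $n\ge3$, $a_n(p)=n!-\frac{(n-1)!}{2}$.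
   Context: For $n\ge1$, $\mathcal S_n$ is the set of permutations $\pi=\pi_1\cdots\pi_n$ of $[n]$. A bi-vincular pattern of length $k$ is a triple $p=(\sigma,X,Y)$ with $\sigma\in\mathcal S_k$ and $X,Y\subseteq\{0,1,\dots,k\}$. A permutation $\pi\in\mathcal S_n$ contains $p$ if there are indices $1\le i_1<\dots<i_k\le n$ such that $(\pi_{i_1},\dots,\pi_{i_k})$ is order-isomorphic to $\sigma$ and, letting $j_1<\dots<j_k$ be the values $\pi_{i_1},\dots,\pi_{i_k}$ sorted increasingly and setting $i_0=j_0=0$, $i_{k+1}=j_{k+1}=n+1$, one has $i_{x+1}=i_x+1$ for all $x\in X$ and $j_{y+1}=j_y+1$ for all $y\in Y$. Otherwise $\pi$ avoids $p$; $a_n(p)$ is the number of $\pi\in\mathcal S_n$ avoiding $p$. Symmetries: $p^{i}=(\sigma^{-1},Y,X)$, $p^{r}=(\sigma^{r},\{k-x:x\in X\},Y)$, $p^{c}=(\sigma^{c},X,\{k-y:y\in Y\})$ with $\sigma^r_j=\sigma_{k+1-j}$, $\sigma^c_j=k+1-\sigma_j$; the symmetry class of $p$ consists of all patterns obtained from $p$ by finitely many applications of these maps. *)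

theory Defs
  imports Main "HOL-Combinatorics.Multiset_Permutations"
begin

text \<open>Permutations of [n] are lists pi with pi_i = pi ! (i - 1) (1-indexed).
A bi-vincular pattern is a triple (sigma, X, Y), sigma a list which is a permutation of [k].\<close>

type_synonym bvpat = "nat list \<times> nat set \<times> nat set"

definition Sn :: "nat \<Rightarrow> nat list set" where
  "Sn n = permutations_of_set {1..n}"

definition contains :: "nat list \<Rightarrow> bvpat \<Rightarrow> bool" where
  "contains \<pi> p = (case p of (\<sigma>, X, Y) \<Rightarrow>
     (let n = length \<pi>; k = length \<sigma> in
      \<exists>i :: nat \<Rightarrow> nat.
        (\<forall>a\<in>{1..k}. 1 \<le> i a \<and> i a \<le> n) \<and>
        (\<forall>a b. 1 \<le> a \<longrightarrow> a < b \<longrightarrow> b \<le> k \<longrightarrow> i a < i b) \<and>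
        (\<forall>a\<in>{1..k}. \<forall>b\<in>{1..k}.
            (\<pi> ! (i a - 1) < \<pi> ! (i b - 1)) \<longleftrightarrow> (\<sigma> ! (a - 1) < \<sigma> ! (b - 1))) \<and>
        (let I = (\<lambda>x. if x = 0 then 0 else if x = k + 1 then n + 1 else i x);
             V = sorted_list_of_set ((\<lambda>a. \<pi> ! (i a - 1)) ` {1..k});
             J = (\<lambda>y. if y = 0 then 0 else if y = k + 1 then n + 1 else V ! (y - 1))
         in (\<forall>x\<in>X. I (x + 1) = I x + 1) \<and> (\<forall>y\<in>Y. J (y + 1) = J y + 1))))"

definition avoid_count :: "nat \<Rightarrow> bvpat \<Rightarrow> nat" where
  "avoid_count n p = card {\<pi> \<in> Sn n. \<not> contains \<pi> p}"

definition inv_list :: "nat list \<Rightarrow> nat list" where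
  "inv_list \<sigma> = map (\<lambda>v. (THE a. 1 \<le> a \<and> a \<le> length \<sigma> \<and> \<sigma> ! (a - 1) = v)) [1..<length \<sigma> + 1]"

definition pat_inv :: "bvpat \<Rightarrow> bvpat" where
  "pat_inv p = (case p of (\<sigma>, X, Y) \<Rightarrow> (inv_list \<sigma>, Y, X))"

definition pat_rev :: "bvpat \<Rightarrow> bvpat" where
  "pat_rev p = (case p of (\<sigma>, X, Y) \<Rightarrow> (rev \<sigma>, (\<lambda>x. length \<sigma> - x) ` X, Y))"

definition pat_comp :: "bvpat \<Rightarrow> bvpat" where
  "pat_comp p = (case p of (\<sigma>, X, Y) \<Rightarrow>
     (map (\<lambda>v. length \<sigma> + 1 - v) \<sigma>, X, (\<lambda>y. length \<sigma> - y) ` Y))"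

inductive_set sym_class :: "bvpat \<Rightarrow> bvpat set" for p :: bvpat where
  refl: "p \<in> sym_class p"
| inv: "q \<in> sym_class p \<Longrightarrow> pat_inv q \<in> sym_class p"
| rev: "q \<in> sym_class p \<Longrightarrow> pat_rev q \<in> sym_class p"
| comp: "q \<in> sym_class p \<Longrightarrow> pat_comp q \<in> sym_class p"

definition base_patterns :: "bvpat set" where
  "base_patterns = {
    ([1,2,3], {0}, {0,1,2}), ([1,2,3], {0}, {0,1,3}), ([1,2,3], {0}, {0,2,3}), ([1,2,3], {0}, {1,2,3}),
    ([1,2,3], {1}, {0,1,2}), ([1,2,3], {1}, {0,1,3}), ([1,2,3], {1}, {0,2,3}), ([1,2,3], {1}, {1,2,3}),
    ([1,3,2], {0}, {0,1,2}), ([1,3,2], {0}, {0,1,3}), ([1,3,2], {0}, {0,2,3}), ([1,3,2], {0}, {1,2,3}),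
    ([1,3,2], {1}, {0,1,2}), ([1,3,2], {1}, {0,1,3}), ([1,3,2], {1}, {0,2,3}), ([1,3,2], {1}, {1,2,3}),
    ([1,3,2], {2}, {0,1,2}), ([1,3,2], {2}, {0,1,3}), ([1,3,2], {2}, {0,2,3}), ([1,3,2], {2}, {1,2,3}),
    ([1,3,2], {0,1,2}, {3}), ([1,3,2], {3}, {0,1,3}), ([1,3,2], {3}, {0,2,3}), ([1,3,2], {3}, {1,2,3})}"

end

theory Submission
  imports Defs
begin


definition before :: "'a \<Rightarrow> 'a \<Rightarrow> 'a list \<Rightarrow> bool" where
  "before a b xs \<longleftrightarrow> (\<exists>p q r. xs = p @ a # q @ b # r)"

lemma before_map: "before a b xs \<Longrightarrow> before (f a) (f b) (map f xs)"
  unfolding before_def by force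

lemma before_cases:
  assumes "distinct xs" "a \<in> set xs" "b \<in> set xs" "a \<noteq> b"
  shows "before a b xs \<or> before b a xs"
proof -
  obtain p t where xs: "xs = p @ a # t" using assms(2) by (meson split_list)
  show ?thesis
  proof (cases "b \<in> set p")
    case True
    then obtain p1 p2 where "p = p1 @ b # p2" by (meson split_list)
    then have "xs = p1 @ b # p2 @ a # t" using xs by simp
    then show ?thesis unfolding before_def by blast
  next
    case False
    then have "b \<in> set t" using assms xs by auto
    then obtain t1 t2 where "t = t1 @ b # t2" by (meson split_list)
    then have "xs = p @ a # t1 @ b # t2" using xs by simp
    then show ?thesis unfolding before_def by blast
  qed
qed

lemma before_excl:
  assumes "distinct xs" "before a b xs" "before b a xs"
  shows False
proof -
  obtain p q r where 1: "xs = p @ a # q @ b # r" using assms(2) unfolding before_def by auto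
  obtain p' q' r' where 2: "xs = p' @ b # q' @ a # r'" using assms(3) unfolding before_def by auto
  have "p @ a # (q @ b # r) = (p' @ b # q') @ a # r'" using 1 2 by simp
  moreover have "a \<notin> set p" "a \<notin> set (q @ b # r)" using assms(1) 1 by auto
  ultimately have "p = p' @ b # q'" using append_Cons_eq_iff by metis
  then show False using assms(1) 1 by auto
qed

definition swp :: "'a \<Rightarrow> 'a \<Rightarrow> 'a \<Rightarrow> 'a" where
  "swp a b x = (if x = a then b else if x = b then a else x)"

lemma swp_swp[simp]: "swp a b (swp a b x) = x"
  unfolding swp_def by auto

lemma map_swp_perm:
  assumes "xs \<in> permutations_of_set A" "a \<in> A" "b \<in> A"
  shows "map (swp a b) xs \<in> permutations_of_set A"
proof -
  have inj: "inj (swp a b)" by (metis injI swp_swp)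
  have "swp a b ` A = A"
  proof
    show "swp a b ` A \<subseteq> A" using assms unfolding swp_def by auto
    show "A \<subseteq> swp a b ` A" using \<open>swp a b ` A \<subseteq> A\<close> by (metis image_eqI subsetD subsetI swp_swp)
  qed
  then show ?thesis using assms(1) inj unfolding permutations_of_set_def
    by (auto simp: distinct_map inj_on_def)
qed

lemma half_before:
  assumes "finite A" "a \<in> A" "b \<in> A" "a \<noteq> b"
  shows "2 * card {xs \<in> permutations_of_set A. before a b xs} = fact (card A)"
proof -
  let ?P = "permutations_of_set A"
  let ?B1 = "{xs \<in> ?P. before a b xs}" and ?B2 = "{xs \<in> ?P. before b a xs}"
  have un: "?P = ?B1 \<union> ?B2"
    using before_cases assms unfolding permutations_of_set_def by fastforce
  have dis: "?B1 \<inter> ?B2 = {}"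
    using before_excl unfolding permutations_of_set_def by fastforce
  have "map (swp a b) ` ?B1 = ?B2"
  proof
    show "map (swp a b) ` ?B1 \<subseteq> ?B2"
      using map_swp_perm[OF _ assms(2,3)] before_map[of a b _ "swp a b"] assms(4)
      by (auto simp: swp_def)
    show "?B2 \<subseteq> map (swp a b) ` ?B1"
    proof
      fix xs assume xs: "xs \<in> ?B2"
      have "map (swp a b) xs \<in> ?B1"
        using xs map_swp_perm[OF _ assms(2,3)] before_map[of b a xs "swp a b"] assms(4)
        by (auto simp: swp_def)
      moreover have "xs = map (swp a b) (map (swp a b) xs)" by (simp add: comp_def)
      ultimately show "xs \<in> map (swp a b) ` ?B1" by blast
    qed
  qed
  moreover have "inj_on (map (swp a b)) ?B1"
    by (rule inj_on_inverseI[where g="map (swp a b)"]) (simp add: comp_def)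
  ultimately have "card ?B2 = card ?B1" by (metis card_image)
  moreover have "card ?P = card ?B1 + card ?B2"
    using un dis by (metis card_Un_disjoint finite_Un finite_permutations_of_set)
  ultimately show ?thesis using assms(1) by simp
qed



lemma perm_Cons_iff:
  assumes "u \<in> A"
  shows "u # r \<in> permutations_of_set A \<longleftrightarrow> r \<in> permutations_of_set (A - {u})"
  using assms unfolding permutations_of_set_def by auto

lemma perm_rev: "xs \<in> permutations_of_set A \<Longrightarrow> rev xs \<in> permutations_of_set A"
  unfolding permutations_of_set_def by simp

lemma count_C0:
  assumes "finite A" "u \<in> A" "v \<in> A" "w \<in> A" "u \<noteq> v" "v \<noteq> w" "u \<noteq> w"
  shows "2 * card {xs \<in> permutations_of_set A. \<exists>q r s. xs = u # q @ v # r @ w # s}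
         = fact (card A - 1)"
proof -
  let ?C = "{xs \<in> permutations_of_set A. \<exists>q r s. xs = u # q @ v # r @ w # s}"
  let ?B = "{xs \<in> permutations_of_set (A - {u}). before v w xs}"
  have img: "tl ` ?C = ?B"
  proof
    show "tl ` ?C \<subseteq> ?B"
    proof
      fix ys assume "ys \<in> tl ` ?C"
      then obtain xs q r s where xs: "xs \<in> permutations_of_set A" "xs = u # q @ v # r @ w # s"
        and ys: "ys = tl xs" by blast
      have "ys \<in> permutations_of_set (A - {u})" using xs ys perm_Cons_iff[OF assms(2)] by simp
      moreover have "before v w ys" unfolding before_def ys xs by auto
      ultimately show "ys \<in> ?B" by blast
    qed
    show "?B \<subseteq> tl ` ?C"
    proof
      fix ys assume ys: "ys \<in> ?B"
      then obtain q r s where "ys = q @ v # r @ w # s" unfolding before_def by blast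
      then have "u # ys \<in> ?C" using ys perm_Cons_iff[OF assms(2)] by blast
      moreover have "ys = tl (u # ys)" by simp
      ultimately show "ys \<in> tl ` ?C" by (rule rev_image_eqI)
    qed
  qed
  have inj: "inj_on tl ?C"
  proof (rule inj_on_inverseI[where g="(#) u"])
    fix xs assume "xs \<in> ?C"
    then obtain q r s where "xs = u # q @ v # r @ w # s" by blast
    then show "u # tl xs = xs" by simp
  qed
  have "card ?C = card ?B" using card_image[OF inj] img by simp
  moreover have "2 * card ?B = fact (card (A - {u}))"
    using half_before[of "A - {u}" v w] assms by auto
  ultimately show ?thesis using assms by simp
qed

lemma count_C3:
  assumes "finite A" "u \<in> A" "v \<in> A" "w \<in> A" "u \<noteq> v" "v \<noteq> w" "u \<noteq> w"
  shows "2 * card {xs \<in> permutations_of_set A. \<exists>p q r. xs = p @ u # q @ v # r @ [w]}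
         = fact (card A - 1)"
proof -
  let ?C = "{xs \<in> permutations_of_set A. \<exists>p q r. xs = p @ u # q @ v # r @ [w]}"
  let ?D = "{xs \<in> permutations_of_set A. \<exists>q r s. xs = w # q @ v # r @ u # s}"
  have img: "rev ` ?C = ?D"
  proof
    show "rev ` ?C \<subseteq> ?D"
    proof
      fix ys assume "ys \<in> rev ` ?C"
      then obtain xs p q r where xs: "xs \<in> permutations_of_set A" "xs = p @ u # q @ v # r @ [w]"
        and ys: "ys = rev xs" by blast
      have "ys = w # rev r @ v # rev q @ u # rev p" using xs ys by simp
      moreover have "ys \<in> permutations_of_set A" using xs ys perm_rev by blast
      ultimately show "ys \<in> ?D" by blast
    qed
    show "?D \<subseteq> rev ` ?C"
    proof
      fix ys assume ys: "ys \<in> ?D"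
      then obtain q r s where "ys = w # q @ v # r @ u # s" by blast
      then have "rev ys = rev s @ u # rev r @ v # rev q @ [w]" by simp
      moreover have "rev ys \<in> permutations_of_set A" using ys perm_rev by blast
      ultimately have "rev ys \<in> ?C" by blast
      moreover have "ys = rev (rev ys)" by simp
      ultimately show "ys \<in> rev ` ?C" by (rule rev_image_eqI)
    qed
  qed
  have inj: "inj_on rev ?C" by (meson inj_on_def rev_is_rev_conv)
  have "card ?C = card ?D" using card_image[OF inj] img by simp
  then show ?thesis using count_C0[of A w v u] assms by auto
qed

lemma concat_map_ins:
  "a \<notin> set p \<Longrightarrow> concat (map (\<lambda>y. if y = a then [a, b] else [y]) p) = p"
  by (induction p) auto

lemma fw1: "distinct xs \<Longrightarrow> xs = p @ u # v # r @ w # s \<Longrightarrow> remove1 v xs = p @ u # r @ w # s"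
  by (auto simp: remove1_append)
lemma fw2: "distinct (p @ u # r @ w # s) \<Longrightarrow> concat (map (\<lambda>y. if y = u then [u, v] else [y]) (p @ u # r @ w # s)) = p @ u # v # r @ w # s"
  by (auto simp add: concat_map_ins)
lemma fw3: "distinct xs \<Longrightarrow> xs = p @ u # q @ v # w # s \<Longrightarrow> remove1 w xs = p @ u # q @ v # s"
  by (auto simp: remove1_append)
lemma fw4: "distinct (p @ u # q @ v # s) \<Longrightarrow> concat (map (\<lambda>y. if y = v then [v, w] else [y]) (p @ u # q @ v # s)) = p @ u # q @ v # w # s"
  by (simp add: concat_map_ins)

lemma perm_remove1:
  assumes "xs \<in> permutations_of_set A"
  shows "remove1 v xs \<in> permutations_of_set (A - {v})"
proof -
  have "set xs = A" "distinct xs" using assms unfolding permutations_of_set_def by auto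
  then show ?thesis unfolding permutations_of_set_def by (simp add: set_remove1_eq)
qed

lemma perm_ins:
  assumes "ys \<in> permutations_of_set (A - {v})" "v \<in> A" "ys = p @ u # t"
  shows "p @ u # v # t \<in> permutations_of_set A"
proof -
  have "set ys = A - {v}" "distinct ys" using assms(1) unfolding permutations_of_set_def by auto
  then show ?thesis using assms(2,3) unfolding permutations_of_set_def by auto
qed

lemma count_C1:
  assumes "finite A" "u \<in> A" "v \<in> A" "w \<in> A" "u \<noteq> v" "v \<noteq> w" "u \<noteq> w"
  shows "2 * card {xs \<in> permutations_of_set A. \<exists>p r s. xs = p @ u # v # r @ w # s}
         = fact (card A - 1)"
proof -
  let ?C = "{xs \<in> permutations_of_set A. \<exists>p r s. xs = p @ u # v # r @ w # s}"
  let ?B = "{xs \<in> permutations_of_set (A - {v}). before u w xs}"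
  let ?g = "\<lambda>ys. concat (map (\<lambda>y. if y = u then [u, v] else [y]) ys)"
  have fw: "remove1 v xs = p @ u # r @ w # s \<and> ?g (remove1 v xs) = xs"
    if "xs \<in> permutations_of_set A" "xs = p @ u # v # r @ w # s" for xs p r s
  proof -
    have d: "distinct xs" using that(1) unfolding permutations_of_set_def by auto
    have 1: "remove1 v xs = p @ u # r @ w # s" using fw1[OF d that(2)] .
    have "distinct (p @ u # r @ w # s)" using distinct_remove1[OF d, of v] unfolding 1 .
    then have "?g (p @ u # r @ w # s) = xs" using fw2[of p u r w s v] that(2) by simp
    then show ?thesis using 1 by simp
  qed
  have img: "remove1 v ` ?C = ?B"
  proof
    show "remove1 v ` ?C \<subseteq> ?B"
    proof
      fix ys assume "ys \<in> remove1 v ` ?C"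
      then obtain xs p r s where xs: "xs \<in> permutations_of_set A" "xs = p @ u # v # r @ w # s"
        and ys: "ys = remove1 v xs" by blast
      have "ys = p @ u # r @ w # s" using fw[OF xs] ys by simp
      moreover have "ys \<in> permutations_of_set (A - {v})" using perm_remove1[OF xs(1)] ys by simp
      ultimately show "ys \<in> ?B" unfolding before_def by blast
    qed
    show "?B \<subseteq> remove1 v ` ?C"
    proof
      fix ys assume ys: "ys \<in> ?B"
      then obtain p r s where ysd: "ys = p @ u # r @ w # s" unfolding before_def by blast
      have dy: "distinct ys" using ys unfolding permutations_of_set_def by auto
      have ge: "?g ys = p @ u # v # r @ w # s" using fw2[of p u r w s v] dy ysd by simp
      have "p @ u # v # r @ w # s \<in> permutations_of_set A"
        using perm_ins[of ys A v p u "r @ w # s"] ys ysd assms(3) by auto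
      then have gC: "?g ys \<in> ?C" using ge by auto
      moreover have "ys = remove1 v (?g ys)"
        using fw[OF \<open>p @ u # v # r @ w # s \<in> permutations_of_set A\<close>, of p r s] ge ysd by simp
      ultimately show "ys \<in> remove1 v ` ?C" by (rule rev_image_eqI)
    qed
  qed
  have inj: "inj_on (remove1 v) ?C"
  proof (rule inj_on_inverseI[where g="?g"])
    fix xs assume "xs \<in> ?C"
    then obtain p r s where "xs \<in> permutations_of_set A" "xs = p @ u # v # r @ w # s" by blast
    then show "?g (remove1 v xs) = xs" by (rule conjunct2[OF fw])
  qed
  have "card ?C = card ?B" using card_image[OF inj] img by simp
  moreover have "2 * card ?B = fact (card (A - {v}))"
    using half_before[of "A - {v}" u w] assms by auto
  ultimately show ?thesis using assms by simp
qed

lemma count_C2: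
  assumes "finite A" "u \<in> A" "v \<in> A" "w \<in> A" "u \<noteq> v" "v \<noteq> w" "u \<noteq> w"
  shows "2 * card {xs \<in> permutations_of_set A. \<exists>p q s. xs = p @ u # q @ v # w # s}
         = fact (card A - 1)"
proof -
  let ?C = "{xs \<in> permutations_of_set A. \<exists>p q s. xs = p @ u # q @ v # w # s}"
  let ?B = "{xs \<in> permutations_of_set (A - {w}). before u v xs}"
  let ?g = "\<lambda>ys. concat (map (\<lambda>y. if y = v then [v, w] else [y]) ys)"
  have fw: "remove1 w xs = p @ u # q @ v # s \<and> ?g (remove1 w xs) = xs"
    if "xs \<in> permutations_of_set A" "xs = p @ u # q @ v # w # s" for xs p q s
  proof -
    have d: "distinct xs" using that(1) unfolding permutations_of_set_def by auto
    have 1: "remove1 w xs = p @ u # q @ v # s" using fw3[OF d that(2)] .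
    have "distinct (p @ u # q @ v # s)" using distinct_remove1[OF d, of w] unfolding 1 .
    then have "?g (p @ u # q @ v # s) = xs" using fw4[of p u q v s w] that(2) by simp
    then show ?thesis using 1 by simp
  qed
  have img: "remove1 w ` ?C = ?B"
  proof
    show "remove1 w ` ?C \<subseteq> ?B"
    proof
      fix ys assume "ys \<in> remove1 w ` ?C"
      then obtain xs p q s where xs: "xs \<in> permutations_of_set A" "xs = p @ u # q @ v # w # s"
        and ys: "ys = remove1 w xs" by blast
      have "ys = p @ u # q @ v # s" using fw[OF xs] ys by simp
      moreover have "ys \<in> permutations_of_set (A - {w})" using perm_remove1[OF xs(1)] ys by simp
      ultimately show "ys \<in> ?B" unfolding before_def by blast
    qed
    show "?B \<subseteq> remove1 w ` ?C"
    proof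
      fix ys assume ys: "ys \<in> ?B"
      then obtain p q s where ysd: "ys = p @ u # q @ v # s" unfolding before_def by blast
      have dy: "distinct ys" using ys unfolding permutations_of_set_def by auto
      have ge: "?g ys = p @ u # q @ v # w # s" using fw4[of p u q v s w] dy ysd by simp
      have "(p @ u # q) @ v # w # s \<in> permutations_of_set A"
        using perm_ins[of ys A w "p @ u # q" v s] ys ysd assms(4) by auto
      then have pA: "p @ u # q @ v # w # s \<in> permutations_of_set A" by simp
      then have gC: "?g ys \<in> ?C" using ge by auto
      moreover have "ys = remove1 w (?g ys)"
        using fw[OF pA, of p q s] ge ysd by simp
      ultimately show "ys \<in> remove1 w ` ?C" by (rule rev_image_eqI)
    qed
  qed
  have inj: "inj_on (remove1 w) ?C"
  proof (rule inj_on_inverseI[where g="?g"])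
    fix xs assume "xs \<in> ?C"
    then obtain p q s where "xs \<in> permutations_of_set A" "xs = p @ u # q @ v # w # s" by blast
    then show "?g (remove1 w xs) = xs" by (rule conjunct2[OF fw])
  qed
  have "card ?C = card ?B" using card_image[OF inj] img by simp
  moreover have "2 * card ?B = fact (card (A - {w}))"
    using half_before[of "A - {w}" u v] assms by auto
  ultimately show ?thesis using assms by simp
qed



definition T4 :: "nat \<Rightarrow> nat \<Rightarrow> nat \<Rightarrow> nat \<Rightarrow> nat \<Rightarrow> nat" where
  "T4 m a b c x = (if x = 0 then 0 else if x = 1 then a else if x = 2 then b else if x = 3 then c else m + 1)"

definition iso3 :: "nat \<Rightarrow> nat \<Rightarrow> nat \<Rightarrow> nat list \<Rightarrow> bool" where
  "iso3 a b c \<sigma> = (\<forall>s\<in>{0,1,2}. \<forall>t\<in>{0,1,2}. ([a,b,c]!s < [a,b,c]!t) = (\<sigma>!s < \<sigma>!t))"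

definition cond3 :: "nat list \<Rightarrow> nat list \<Rightarrow> nat set \<Rightarrow> nat set \<Rightarrow> nat \<Rightarrow> nat \<Rightarrow> nat \<Rightarrow> bool" where
  "cond3 \<pi> \<sigma> X Y i1 i2 i3 = (1 \<le> i1 \<and> i1 < i2 \<and> i2 < i3 \<and> i3 \<le> length \<pi> \<and>
     iso3 (\<pi>!(i1-1)) (\<pi>!(i2-1)) (\<pi>!(i3-1)) \<sigma> \<and>
     (\<forall>x\<in>X. T4 (length \<pi>) i1 i2 i3 (x+1) = T4 (length \<pi>) i1 i2 i3 x + 1) \<and>
     (let V = sorted_list_of_set {\<pi>!(i1-1), \<pi>!(i2-1), \<pi>!(i3-1)} in
       \<forall>y\<in>Y. T4 (length \<pi>) (V!0) (V!1) (V!2) (y+1) = T4 (length \<pi>) (V!0) (V!1) (V!2) y + 1))"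

lemma set123: "{1..3::nat} = {1,2,3}" by auto

lemma cond_equiv:
  fixes \<pi> \<sigma> :: "nat list" and i :: "nat \<Rightarrow> nat"
  assumes "X \<subseteq> {0..3}" "Y \<subseteq> {0..3}"
  shows "((\<forall>a\<in>{1..3}. 1 \<le> i a \<and> i a \<le> length \<pi>) \<and>
        (\<forall>a b. 1 \<le> a \<longrightarrow> a < b \<longrightarrow> b \<le> 3 \<longrightarrow> i a < i b) \<and>
        (\<forall>a\<in>{1..3}. \<forall>b\<in>{1..3}.
            (\<pi> ! (i a - 1) < \<pi> ! (i b - 1)) \<longleftrightarrow> (\<sigma> ! (a - 1) < \<sigma> ! (b - 1))) \<and>
        (let I = (\<lambda>x. if x = 0 then 0 else if x = 3 + 1 then length \<pi> + 1 else i x);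
             V = sorted_list_of_set ((\<lambda>a. \<pi> ! (i a - 1)) ` {1..3});
             J = (\<lambda>y. if y = 0 then 0 else if y = 3 + 1 then length \<pi> + 1 else V ! (y - 1))
         in (\<forall>x\<in>X. I (x + 1) = I x + 1) \<and> (\<forall>y\<in>Y. J (y + 1) = J y + 1)))
     \<longleftrightarrow> cond3 \<pi> \<sigma> X Y (i 1) (i 2) (i 3)"
proof -
  let ?n = "length \<pi>"
  have img: "(\<lambda>a. \<pi> ! (i a - 1)) ` {1..3} = {\<pi>!(i 1-1), \<pi>!(i 2-1), \<pi>!(i 3-1)}"
    by (simp only: set123 image_insert image_empty)
  define V where "V = sorted_list_of_set {\<pi>!(i 1-1), \<pi>!(i 2-1), \<pi>!(i 3-1)}"
  have I: "(if x = 0 then 0 else if x = 3 + 1 then ?n + 1 else i x) = T4 ?n (i 1) (i 2) (i 3) x"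
    if "x \<le> 4" for x
    using that unfolding T4_def by (cases "x = 0 \<or> x = 1 \<or> x = 2 \<or> x = 3 \<or> x = 4") auto
  have J: "(if x = 0 then 0 else if x = 3 + 1 then ?n + 1 else V ! (x - 1)) = T4 ?n (V!0) (V!1) (V!2) x"
    if "x \<le> 4" for x
    using that unfolding T4_def by (cases "x = 0 \<or> x = 1 \<or> x = 2 \<or> x = 3 \<or> x = 4") auto
  have XI: "(\<forall>x\<in>X. (if x + 1 = 0 then 0 else if x + 1 = 3 + 1 then ?n + 1 else i (x+1)) =
                   (if x = 0 then 0 else if x = 3 + 1 then ?n + 1 else i x) + 1)
          \<longleftrightarrow> (\<forall>x\<in>X. T4 ?n (i 1) (i 2) (i 3) (x+1) = T4 ?n (i 1) (i 2) (i 3) x + 1)"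
  proof (rule ball_cong[OF HOL.refl])
    fix x assume "x \<in> X"
    then have x3: "x \<le> 3" using assms(1) by auto
    have a: "x \<le> 4" "x + 1 \<le> 4" using x3 by auto
    show "((if x + 1 = 0 then 0 else if x + 1 = 3 + 1 then ?n + 1 else i (x+1)) =
                   (if x = 0 then 0 else if x = 3 + 1 then ?n + 1 else i x) + 1)
          \<longleftrightarrow> (T4 ?n (i 1) (i 2) (i 3) (x+1) = T4 ?n (i 1) (i 2) (i 3) x + 1)"
      unfolding I[OF a(1)] I[OF a(2)] ..
  qed
  have YJ: "(\<forall>x\<in>Y. (if x + 1 = 0 then 0 else if x + 1 = 3 + 1 then ?n + 1 else V ! (x + 1 - 1)) =
                   (if x = 0 then 0 else if x = 3 + 1 then ?n + 1 else V ! (x - 1)) + 1)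
          \<longleftrightarrow> (\<forall>x\<in>Y. T4 ?n (V!0) (V!1) (V!2) (x+1) = T4 ?n (V!0) (V!1) (V!2) x + 1)"
  proof (rule ball_cong[OF HOL.refl])
    fix x assume "x \<in> Y"
    then have x3: "x \<le> 3" using assms(2) by auto
    have a: "x \<le> 4" "x + 1 \<le> 4" using x3 by auto
    show "((if x + 1 = 0 then 0 else if x + 1 = 3 + 1 then ?n + 1 else V ! (x + 1 - 1)) =
                   (if x = 0 then 0 else if x = 3 + 1 then ?n + 1 else V ! (x - 1)) + 1)
          \<longleftrightarrow> (T4 ?n (V!0) (V!1) (V!2) (x+1) = T4 ?n (V!0) (V!1) (V!2) x + 1)"
      unfolding J[OF a(1)] J[OF a(2)] ..
  qed
  have ord: "(\<forall>a b. 1 \<le> a \<longrightarrow> a < b \<longrightarrow> b \<le> (3::nat) \<longrightarrow> i a < i b) \<longleftrightarrow> (i 1 < i 2 \<and> i 2 < i 3)"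
  proof
    assume "i 1 < i 2 \<and> i 2 < i 3"
    then show "\<forall>a b. 1 \<le> a \<longrightarrow> a < b \<longrightarrow> b \<le> (3::nat) \<longrightarrow> i a < i b"
    proof (intro allI impI)
      fix a b :: nat assume h: "i 1 < i 2 \<and> i 2 < i 3" "1 \<le> a" "a < b" "b \<le> 3"
      then have "(a = 1 \<and> b = 2) \<or> (a = 1 \<and> b = 3) \<or> (a = 2 \<and> b = 3)" by auto
      then show "i a < i b" using h(1) by auto
    qed
  qed auto
  have rng: "(\<forall>a\<in>{1..3::nat}. 1 \<le> i a \<and> i a \<le> ?n) \<longleftrightarrow> (1 \<le> i 1 \<and> i 1 \<le> ?n \<and> 1 \<le> i 2 \<and> i 2 \<le> ?n \<and> 1 \<le> i 3 \<and> i 3 \<le> ?n)"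
    unfolding set123 by simp
  have iso: "(\<forall>a\<in>{1..3::nat}. \<forall>b\<in>{1..3::nat}. (\<pi> ! (i a - 1) < \<pi> ! (i b - 1)) \<longleftrightarrow> (\<sigma> ! (a - 1) < \<sigma> ! (b - 1)))
     \<longleftrightarrow> iso3 (\<pi>!(i 1-1)) (\<pi>!(i 2-1)) (\<pi>!(i 3-1)) \<sigma>"
    unfolding iso3_def set123 by simp
  show ?thesis
    unfolding Let_def img V_def[symmetric] rng ord iso XI YJ cond3_def by auto
qed

lemma contains3:
  assumes "length \<sigma> = 3" "X \<subseteq> {0..3}" "Y \<subseteq> {0..3}"
  shows "contains \<pi> (\<sigma>, X, Y) \<longleftrightarrow> (\<exists>i1 i2 i3. cond3 \<pi> \<sigma> X Y i1 i2 i3)"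
proof -
  have "contains \<pi> (\<sigma>, X, Y) \<longleftrightarrow> (\<exists>i::nat\<Rightarrow>nat. cond3 \<pi> \<sigma> X Y (i 1) (i 2) (i 3))"
    unfolding contains_def prod.case Let_def assms(1)
    using cond_equiv[OF assms(2,3), unfolded Let_def] by simp
  also have "\<dots> \<longleftrightarrow> (\<exists>i1 i2 i3. cond3 \<pi> \<sigma> X Y i1 i2 i3)"
  proof
    assume "\<exists>i1 i2 i3. cond3 \<pi> \<sigma> X Y i1 i2 i3"
    then obtain i1 i2 i3 where c: "cond3 \<pi> \<sigma> X Y i1 i2 i3" by blast
    define i where "i = (\<lambda>a::nat. if a = 1 then i1 else if a = 2 then i2 else i3)"
    have "cond3 \<pi> \<sigma> X Y (i 1) (i 2) (i 3)" using c unfolding i_def by simp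
    then show "\<exists>i::nat\<Rightarrow>nat. cond3 \<pi> \<sigma> X Y (i 1) (i 2) (i 3)" by blast
  qed blast
  finally show ?thesis .
qed



lemma sorted3: "a < b \<Longrightarrow> b < c \<Longrightarrow> sorted_list_of_set {a,b,c::nat} = [a,b,c]"
proof -
  assume h: "a < b" "b < c"
  have "{a,b,c} = set [a,b,c]" by simp
  then have "sorted_list_of_set {a,b,c} = sort (remdups [a,b,c])"
    by (simp only: sorted_list_of_set_sort_remdups)
  then show ?thesis using h by simp
qed

definition S3L :: "nat list set" where
  "S3L = {[1,2,3],[1,3,2],[2,1,3],[2,3,1],[3,1,2],[3,2,1]}"

definition Ys :: "nat set set" where
  "Ys = {{0,1,2},{0,1,3},{0,2,3},{1,2,3}}"

definition sel :: "nat \<Rightarrow> nat \<Rightarrow> nat \<Rightarrow> nat \<Rightarrow> nat" where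
  "sel a b c r = (if r = 1 then a else if r = 2 then b else c)"

definition tv :: "nat set \<Rightarrow> nat \<Rightarrow> nat \<Rightarrow> nat" where
  "tv Y n r = (if Y = {0,1,2} then r else if Y = {0,1,3} then (if r = 3 then n else r)
     else if Y = {0,2,3} then (if r = 1 then 1 else n - 3 + r) else n - 3 + r)"

lemma iso3_c0: "iso3 v1 v2 v3 [1,2,3] \<longleftrightarrow> (\<exists>a b c. a < b \<and> b < c \<and> v1 = sel a b c ([1,2,3]!0) \<and>
            v2 = sel a b c ([1,2,3]!1) \<and> v3 = sel a b c ([1,2,3]!2))"
proof
  assume "iso3 v1 v2 v3 [1,2,3]"
  then show "\<exists>a b c. a < b \<and> b < c \<and> v1 = sel a b c ([1,2,3]!0) \<and>
            v2 = sel a b c ([1,2,3]!1) \<and> v3 = sel a b c ([1,2,3]!2)"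
    unfolding iso3_def sel_def by (intro exI[of _ v1] exI[of _ v2] exI[of _ v3]) auto
qed (auto simp: iso3_def sel_def)

lemma iso3_c1: "iso3 v1 v2 v3 [1,3,2] \<longleftrightarrow> (\<exists>a b c. a < b \<and> b < c \<and> v1 = sel a b c ([1,3,2]!0) \<and>
            v2 = sel a b c ([1,3,2]!1) \<and> v3 = sel a b c ([1,3,2]!2))"
proof
  assume "iso3 v1 v2 v3 [1,3,2]"
  then show "\<exists>a b c. a < b \<and> b < c \<and> v1 = sel a b c ([1,3,2]!0) \<and>
            v2 = sel a b c ([1,3,2]!1) \<and> v3 = sel a b c ([1,3,2]!2)"
    unfolding iso3_def sel_def by (intro exI[of _ v1] exI[of _ v3] exI[of _ v2]) auto
qed (auto simp: iso3_def sel_def)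

lemma iso3_c2: "iso3 v1 v2 v3 [2,1,3] \<longleftrightarrow> (\<exists>a b c. a < b \<and> b < c \<and> v1 = sel a b c ([2,1,3]!0) \<and>
            v2 = sel a b c ([2,1,3]!1) \<and> v3 = sel a b c ([2,1,3]!2))"
proof
  assume "iso3 v1 v2 v3 [2,1,3]"
  then show "\<exists>a b c. a < b \<and> b < c \<and> v1 = sel a b c ([2,1,3]!0) \<and>
            v2 = sel a b c ([2,1,3]!1) \<and> v3 = sel a b c ([2,1,3]!2)"
    unfolding iso3_def sel_def by (intro exI[of _ v2] exI[of _ v1] exI[of _ v3]) auto
qed (auto simp: iso3_def sel_def)

lemma iso3_c3: "iso3 v1 v2 v3 [2,3,1] \<longleftrightarrow> (\<exists>a b c. a < b \<and> b < c \<and> v1 = sel a b c ([2,3,1]!0) \<and>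
            v2 = sel a b c ([2,3,1]!1) \<and> v3 = sel a b c ([2,3,1]!2))"
proof
  assume "iso3 v1 v2 v3 [2,3,1]"
  then show "\<exists>a b c. a < b \<and> b < c \<and> v1 = sel a b c ([2,3,1]!0) \<and>
            v2 = sel a b c ([2,3,1]!1) \<and> v3 = sel a b c ([2,3,1]!2)"
    unfolding iso3_def sel_def by (intro exI[of _ v3] exI[of _ v1] exI[of _ v2]) auto
qed (auto simp: iso3_def sel_def)

lemma iso3_c4: "iso3 v1 v2 v3 [3,1,2] \<longleftrightarrow> (\<exists>a b c. a < b \<and> b < c \<and> v1 = sel a b c ([3,1,2]!0) \<and>
            v2 = sel a b c ([3,1,2]!1) \<and> v3 = sel a b c ([3,1,2]!2))"
proof
  assume "iso3 v1 v2 v3 [3,1,2]"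
  then show "\<exists>a b c. a < b \<and> b < c \<and> v1 = sel a b c ([3,1,2]!0) \<and>
            v2 = sel a b c ([3,1,2]!1) \<and> v3 = sel a b c ([3,1,2]!2)"
    unfolding iso3_def sel_def by (intro exI[of _ v2] exI[of _ v3] exI[of _ v1]) auto
qed (auto simp: iso3_def sel_def)

lemma iso3_c5: "iso3 v1 v2 v3 [3,2,1] \<longleftrightarrow> (\<exists>a b c. a < b \<and> b < c \<and> v1 = sel a b c ([3,2,1]!0) \<and>
            v2 = sel a b c ([3,2,1]!1) \<and> v3 = sel a b c ([3,2,1]!2))"
proof
  assume "iso3 v1 v2 v3 [3,2,1]"
  then show "\<exists>a b c. a < b \<and> b < c \<and> v1 = sel a b c ([3,2,1]!0) \<and>
            v2 = sel a b c ([3,2,1]!1) \<and> v3 = sel a b c ([3,2,1]!2)"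
    unfolding iso3_def sel_def by (intro exI[of _ v3] exI[of _ v2] exI[of _ v1]) auto
qed (auto simp: iso3_def sel_def)

lemma iso3_S3L:
  assumes "\<sigma> \<in> S3L"
  shows "iso3 v1 v2 v3 \<sigma> \<longleftrightarrow> (\<exists>a b c. a < b \<and> b < c \<and> v1 = sel a b c (\<sigma>!0) \<and>
            v2 = sel a b c (\<sigma>!1) \<and> v3 = sel a b c (\<sigma>!2))"
  using assms unfolding S3L_def
  by (elim insertE emptyE) (simp_all only: iso3_c0 iso3_c1 iso3_c2 iso3_c3 iso3_c4 iso3_c5)

lemma sorted_sel:
  assumes "\<sigma> \<in> S3L" "a < b" "b < c"
  shows "sorted_list_of_set {sel a b c (\<sigma>!0), sel a b c (\<sigma>!1), sel a b c (\<sigma>!2)} = [a,b,c]"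
proof -
  have "{sel a b c (\<sigma>!0), sel a b c (\<sigma>!1), sel a b c (\<sigma>!2)} = {a,b,c}"
    using assms(1) unfolding S3L_def sel_def by auto
  then show ?thesis using sorted3 assms by simp
qed

lemma ne0: "{0,1,3::nat} \<noteq> {0,1,2}"
  by (rule notI, drule arg_cong[where f="\<lambda>S. (3::nat) \<in> S"], simp)
lemma ne1: "{0,2,3::nat} \<noteq> {0,1,2}"
  by (rule notI, drule arg_cong[where f="\<lambda>S. (3::nat) \<in> S"], simp)
lemma ne2: "{0,2,3::nat} \<noteq> {0,1,3}"
  by (rule notI, drule arg_cong[where f="\<lambda>S. (2::nat) \<in> S"], simp)
lemma ne3: "{1,2,3::nat} \<noteq> {0,1,2}"
  by (rule notI, drule arg_cong[where f="\<lambda>S. (3::nat) \<in> S"], simp)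
lemma ne4: "{1,2,3::nat} \<noteq> {0,1,3}"
  by (rule notI, drule arg_cong[where f="\<lambda>S. (2::nat) \<in> S"], simp)
lemma ne5: "{1,2,3::nat} \<noteq> {0,2,3}"
  by (rule notI, drule arg_cong[where f="\<lambda>S. (1::nat) \<in> S"], simp)
lemmas ne_sets = ne0 ne1 ne2 ne3 ne4 ne5

lemma tv_simps: "tv {0,1,2} n r = r" "tv {0,1,3} n r = (if r = 3 then n else r)"
  "tv {0,2,3} n r = (if r = 1 then 1 else n - 3 + r)" "tv {1,2,3} n r = n - 3 + r"
  unfolding tv_def using ne_sets by auto

lemma Ycond:
  assumes "Y \<in> Ys" "a < b" "b < c" "1 \<le> a" "c \<le> n" "n \<ge> 3"
  shows "(\<forall>y\<in>Y. T4 n a b c (y+1) = T4 n a b c y + 1) \<longleftrightarrow>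
         (a = tv Y n 1 \<and> b = tv Y n 2 \<and> c = tv Y n 3)"
proof -
  have "Y = {0,1,2} \<or> Y = {0,1,3} \<or> Y = {0,2,3} \<or> Y = {1,2,3}" using assms(1) unfolding Ys_def by auto
  then show ?thesis using assms(2-6)
    by (elim disjE; hypsubst; simp only: tv_simps; simp add: T4_def; arith)
qed



lemma set_sel: "\<sigma> \<in> S3L \<Longrightarrow> {sel a b c (\<sigma>!0), sel a b c (\<sigma>!1), sel a b c (\<sigma>!2)} = {a,b,c}"
  unfolding S3L_def sel_def by auto

lemma sel_tv: "\<sigma> \<in> S3L \<Longrightarrow> i < 3 \<Longrightarrow> sel (tv Y n 1) (tv Y n 2) (tv Y n 3) (\<sigma>!i) = tv Y n (\<sigma>!i)"
  unfolding S3L_def sel_def by (auto simp: less_Suc_eq numeral_3_eq_3)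

lemma tv_mono: "Y \<in> Ys \<Longrightarrow> n \<ge> 3 \<Longrightarrow> 1 \<le> tv Y n 1 \<and> tv Y n 1 < tv Y n 2 \<and> tv Y n 2 < tv Y n 3 \<and> tv Y n 3 \<le> n"
  unfolding Ys_def by (elim insertE emptyE; hypsubst; simp only: tv_simps; simp)

lemma Yvals:
  assumes "\<sigma> \<in> S3L" "Y \<in> Ys" "n \<ge> 3" "v1 \<in> {1..n}" "v2 \<in> {1..n}" "v3 \<in> {1..n}"
  shows "(iso3 v1 v2 v3 \<sigma> \<and> (let V = sorted_list_of_set {v1,v2,v3} in
            \<forall>y\<in>Y. T4 n (V!0) (V!1) (V!2) (y+1) = T4 n (V!0) (V!1) (V!2) y + 1))
         \<longleftrightarrow> (v1 = tv Y n (\<sigma>!0) \<and> v2 = tv Y n (\<sigma>!1) \<and> v3 = tv Y n (\<sigma>!2))"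
proof
  assume h: "iso3 v1 v2 v3 \<sigma> \<and> (let V = sorted_list_of_set {v1,v2,v3} in
            \<forall>y\<in>Y. T4 n (V!0) (V!1) (V!2) (y+1) = T4 n (V!0) (V!1) (V!2) y + 1)"
  then obtain a b c where abc: "a < b" "b < c" "v1 = sel a b c (\<sigma>!0)" "v2 = sel a b c (\<sigma>!1)"
    "v3 = sel a b c (\<sigma>!2)" using iso3_S3L[OF assms(1)] by blast
  have st: "sorted_list_of_set {v1,v2,v3} = [a,b,c]" using sorted_sel[OF assms(1) abc(1,2)] abc by simp
  have s: "{v1,v2,v3} = {a,b,c}" using set_sel[OF assms(1)] abc by simp
  have "a \<in> {1..n}" "c \<in> {1..n}" using s assms(4-6) by auto
  then have yc: "a = tv Y n 1 \<and> b = tv Y n 2 \<and> c = tv Y n 3"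
    using Ycond[OF assms(2) abc(1,2) _ _ assms(3)] h st by (simp add: Let_def)
  show "v1 = tv Y n (\<sigma>!0) \<and> v2 = tv Y n (\<sigma>!1) \<and> v3 = tv Y n (\<sigma>!2)"
    using abc yc sel_tv[OF assms(1)] by simp
next
  assume h: "v1 = tv Y n (\<sigma>!0) \<and> v2 = tv Y n (\<sigma>!1) \<and> v3 = tv Y n (\<sigma>!2)"
  define a where "a = tv Y n 1"
  define b where "b = tv Y n 2"
  define c where "c = tv Y n 3"
  have m: "1 \<le> a" "a < b" "b < c" "c \<le> n" using tv_mono[OF assms(2,3)] unfolding a_def b_def c_def by auto
  have vs: "v1 = sel a b c (\<sigma>!0)" "v2 = sel a b c (\<sigma>!1)" "v3 = sel a b c (\<sigma>!2)"
    using h sel_tv[OF assms(1)] unfolding a_def b_def c_def by simp_all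
  have "iso3 v1 v2 v3 \<sigma>" using iso3_S3L[OF assms(1)] vs m by blast
  moreover have st: "sorted_list_of_set {v1,v2,v3} = [a,b,c]" using sorted_sel[OF assms(1) m(2,3)] vs by simp
  moreover have "\<forall>y\<in>Y. T4 n a b c (y+1) = T4 n a b c y + 1"
    using Ycond[OF assms(2) m(2,3,1,4) assms(3)] unfolding a_def b_def c_def by simp
  ultimately show "iso3 v1 v2 v3 \<sigma> \<and> (let V = sorted_list_of_set {v1,v2,v3} in
            \<forall>y\<in>Y. T4 n (V!0) (V!1) (V!2) (y+1) = T4 n (V!0) (V!1) (V!2) y + 1)"
    by (simp add: Let_def)
qed

lemma Sn_facts:
  assumes "\<pi> \<in> Sn n"
  shows "length \<pi> = n" "distinct \<pi>" "set \<pi> = {1..n}"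
  using assms unfolding Sn_def permutations_of_set_def by (auto simp: distinct_card[symmetric])

lemma Sn_nth: "\<pi> \<in> Sn n \<Longrightarrow> 1 \<le> i \<Longrightarrow> i \<le> n \<Longrightarrow> \<pi>!(i-1) \<in> {1..n}"
  using Sn_facts[of \<pi> n] by (metis Suc_le_eq diff_less less_le_trans nth_mem zero_less_one le_trans One_nat_def)

lemma Ychar:
  assumes "\<sigma> \<in> S3L" "Y \<in> Ys" "n \<ge> 3" "\<pi> \<in> Sn n" "x \<le> 3"
  shows "contains \<pi> (\<sigma>, {x}, Y) \<longleftrightarrow>
    (\<exists>i1 i2 i3. 1 \<le> i1 \<and> i1 < i2 \<and> i2 < i3 \<and> i3 \<le> n \<and>
       \<pi>!(i1-1) = tv Y n (\<sigma>!0) \<and> \<pi>!(i2-1) = tv Y n (\<sigma>!1) \<and> \<pi>!(i3-1) = tv Y n (\<sigma>!2) \<and>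
       T4 n i1 i2 i3 (x+1) = T4 n i1 i2 i3 x + 1)"
proof -
  have l: "length \<sigma> = 3" using assms(1) unfolding S3L_def by auto
  have Y: "Y \<subseteq> {0..3}" using assms(2) unfolding Ys_def by auto
  have X: "{x} \<subseteq> {0..3}" using assms(5) by auto
  have len: "length \<pi> = n" using Sn_facts[OF assms(4)] by simp
  have "contains \<pi> (\<sigma>, {x}, Y) \<longleftrightarrow> (\<exists>i1 i2 i3. cond3 \<pi> \<sigma> {x} Y i1 i2 i3)"
    using contains3[OF l X Y] .
  also have "\<dots> \<longleftrightarrow> (\<exists>i1 i2 i3. 1 \<le> i1 \<and> i1 < i2 \<and> i2 < i3 \<and> i3 \<le> n \<and>
       \<pi>!(i1-1) = tv Y n (\<sigma>!0) \<and> \<pi>!(i2-1) = tv Y n (\<sigma>!1) \<and> \<pi>!(i3-1) = tv Y n (\<sigma>!2) \<and>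
       T4 n i1 i2 i3 (x+1) = T4 n i1 i2 i3 x + 1)"
  proof (intro ex_cong1)
    fix i1 i2 i3
    show "cond3 \<pi> \<sigma> {x} Y i1 i2 i3 \<longleftrightarrow> (1 \<le> i1 \<and> i1 < i2 \<and> i2 < i3 \<and> i3 \<le> n \<and>
       \<pi>!(i1-1) = tv Y n (\<sigma>!0) \<and> \<pi>!(i2-1) = tv Y n (\<sigma>!1) \<and> \<pi>!(i3-1) = tv Y n (\<sigma>!2) \<and>
       T4 n i1 i2 i3 (x+1) = T4 n i1 i2 i3 x + 1)"
    proof (cases "1 \<le> i1 \<and> i1 < i2 \<and> i2 < i3 \<and> i3 \<le> n")
      case True
      then have r: "\<pi>!(i1-1) \<in> {1..n}" "\<pi>!(i2-1) \<in> {1..n}" "\<pi>!(i3-1) \<in> {1..n}"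
        using Sn_nth[OF assms(4)] by auto
      show ?thesis using Yvals[OF assms(1-3) r] True unfolding cond3_def len
        by (auto simp: Let_def)
    next
      case False
      then show ?thesis unfolding cond3_def len by auto
    qed
  qed
  finally show ?thesis .
qed



lemma idx3:
  "(\<exists>i1 i2 i3. 1 \<le> i1 \<and> i1 < i2 \<and> i2 < i3 \<and> i3 \<le> length xs \<and>
       xs!(i1-1) = u \<and> xs!(i2-1) = v \<and> xs!(i3-1) = w \<and> R i1 i2 i3) \<longleftrightarrow>
   (\<exists>p q r s. xs = p @ u # q @ v # r @ w # s \<and>
       R (length p + 1) (length p + length q + 2) (length p + length q + length r + 3))"
proof
  assume "\<exists>i1 i2 i3. 1 \<le> i1 \<and> i1 < i2 \<and> i2 < i3 \<and> i3 \<le> length xs \<and>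
       xs!(i1-1) = u \<and> xs!(i2-1) = v \<and> xs!(i3-1) = w \<and> R i1 i2 i3"
  then obtain i1 i2 i3 where h: "1 \<le> i1" "i1 < i2" "i2 < i3" "i3 \<le> length xs"
    "xs!(i1-1) = u" "xs!(i2-1) = v" "xs!(i3-1) = w" "R i1 i2 i3" by blast
  define a where "a = i1 - 1"
  define b where "b = i2 - 1"
  define c where "c = i3 - 1"
  have abc: "a < b" "b < c" "c < length xs" "i1 = a + 1" "i2 = b + 1" "i3 = c + 1"
    using h(1-4) unfolding a_def b_def c_def by auto
  define D1 where "D1 = drop (a+1) xs"
  have e1: "xs = take a xs @ u # D1"
    using id_take_nth_drop[of a xs] abc h(5) unfolding D1_def by simp
  have l1: "b - a - 1 < length D1" "D1 ! (b - a - 1) = v"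
    using abc h(6) unfolding D1_def by auto
  define D2 where "D2 = drop (b - a) D1"
  have e2: "D1 = take (b-a-1) D1 @ v # D2"
    using id_take_nth_drop[of "b-a-1" D1] l1 abc unfolding D2_def by (simp add: Suc_diff_Suc)
  have l2: "c - b - 1 < length D2" "D2 ! (c - b - 1) = w"
    using abc h(7) unfolding D2_def D1_def by auto
  have e3: "D2 = take (c-b-1) D2 @ w # drop (c-b) D2"
    using id_take_nth_drop[of "c-b-1" D2] l2 abc by (simp add: Suc_diff_Suc)
  have lens: "length (take a xs) = a" "length (take (b-a-1) D1) = b-a-1" "length (take (c-b-1) D2) = c-b-1"
    using abc l1 l2 by auto
  have "xs = take a xs @ u # take (b-a-1) D1 @ v # take (c-b-1) D2 @ w # drop (c-b) D2"
    using e1 e2 e3 by simp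
  moreover have "R (length (take a xs) + 1) (length (take a xs) + length (take (b-a-1) D1) + 2)
     (length (take a xs) + length (take (b-a-1) D1) + length (take (c-b-1) D2) + 3)"
    using h(8) abc unfolding lens by (simp add: add.commute)
  ultimately show "\<exists>p q r s. xs = p @ u # q @ v # r @ w # s \<and>
       R (length p + 1) (length p + length q + 2) (length p + length q + length r + 3)" by blast
next
  assume "\<exists>p q r s. xs = p @ u # q @ v # r @ w # s \<and>
       R (length p + 1) (length p + length q + 2) (length p + length q + length r + 3)"
  then obtain p q r s where h: "xs = p @ u # q @ v # r @ w # s"
     "R (length p + 1) (length p + length q + 2) (length p + length q + length r + 3)" by blast
  have n1: "xs ! (length p + 1 - 1) = u" using h(1) by (simp add: nth_append)
  have n2: "xs ! (length p + length q + 2 - 1) = v" using h(1) by (simp add: nth_append)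
  have n3: "xs ! (length p + length q + length r + 3 - 1) = w" using h(1) by (simp add: nth_append)
  have "length p + length q + length r + 3 \<le> length xs" using h(1) by simp
  then show "\<exists>i1 i2 i3. 1 \<le> i1 \<and> i1 < i2 \<and> i2 < i3 \<and> i3 \<le> length xs \<and>
       xs!(i1-1) = u \<and> xs!(i2-1) = v \<and> xs!(i3-1) = w \<and> R i1 i2 i3"
    using n1 n2 n3 h(2) by (intro exI[of _ "length p + 1"] exI[of _ "length p + length q + 2"]
        exI[of _ "length p + length q + length r + 3"]) auto
qed



lemma tv_distinct:
  assumes "\<sigma> \<in> S3L" "Y \<in> Ys" "n \<ge> 3"
  shows "tv Y n (\<sigma>!0) \<noteq> tv Y n (\<sigma>!1)" "tv Y n (\<sigma>!1) \<noteq> tv Y n (\<sigma>!2)"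
    "tv Y n (\<sigma>!0) \<noteq> tv Y n (\<sigma>!2)"
    "tv Y n (\<sigma>!0) \<in> {1..n}" "tv Y n (\<sigma>!1) \<in> {1..n}" "tv Y n (\<sigma>!2) \<in> {1..n}"
  using tv_mono[OF assms(2,3)] assms(1) unfolding S3L_def by auto

lemma Ychar2:
  assumes "\<sigma> \<in> S3L" "Y \<in> Ys" "n \<ge> 3" "\<pi> \<in> Sn n" "x \<le> 3"
  shows "contains \<pi> (\<sigma>, {x}, Y) \<longleftrightarrow>
    (\<exists>p q r s. \<pi> = p @ tv Y n (\<sigma>!0) # q @ tv Y n (\<sigma>!1) # r @ tv Y n (\<sigma>!2) # s \<and>
       (if x = 0 then p = [] else if x = 1 then q = [] else if x = 2 then r = [] else s = []))"
proof -
  have len: "length \<pi> = n" using Sn_facts[OF assms(4)] by simp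
  let ?u = "tv Y n (\<sigma>!0)" and ?v = "tv Y n (\<sigma>!1)" and ?w = "tv Y n (\<sigma>!2)"
  have "contains \<pi> (\<sigma>, {x}, Y) \<longleftrightarrow>
    (\<exists>p q r s. \<pi> = p @ ?u # q @ ?v # r @ ?w # s \<and>
       T4 n (length p + 1) (length p + length q + 2) (length p + length q + length r + 3) (x+1) =
       T4 n (length p + 1) (length p + length q + 2) (length p + length q + length r + 3) x + 1)"
    unfolding Ychar[OF assms] using idx3[of \<pi> ?u ?v ?w "\<lambda>i1 i2 i3. T4 n i1 i2 i3 (x+1) = T4 n i1 i2 i3 x + 1"]
    unfolding len by simp
  also have "\<dots> \<longleftrightarrow> (\<exists>p q r s. \<pi> = p @ ?u # q @ ?v # r @ ?w # s \<and>
       (if x = 0 then p = [] else if x = 1 then q = [] else if x = 2 then r = [] else s = []))"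
  proof (intro ex_cong1 conj_cong)
    fix p q r s
    assume e: "\<pi> = p @ ?u # q @ ?v # r @ ?w # s"
    have "length p + length q + length r + 3 + length s = n" using len e by simp
    then show "T4 n (length p + 1) (length p + length q + 2) (length p + length q + length r + 3) (x+1) =
       T4 n (length p + 1) (length p + length q + 2) (length p + length q + length r + 3) x + 1
      \<longleftrightarrow> (if x = 0 then p = [] else if x = 1 then q = [] else if x = 2 then r = [] else s = [])"
      using assms(5) unfolding T4_def
      by (cases "x = 0 \<or> x = 1 \<or> x = 2 \<or> x = 3") auto
  qed simp
  finally show ?thesis .
qed

lemma Ycount:
  assumes "\<sigma> \<in> S3L" "Y \<in> Ys" "n \<ge> 3" "x \<le> 3"
  shows "2 * card {\<pi> \<in> Sn n. contains \<pi> (\<sigma>, {x}, Y)} = fact (n - 1)"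
proof -
  let ?u = "tv Y n (\<sigma>!0)" and ?v = "tv Y n (\<sigma>!1)" and ?w = "tv Y n (\<sigma>!2)"
  note td = tv_distinct[OF assms(1-3)]
  have eq: "{\<pi> \<in> Sn n. contains \<pi> (\<sigma>, {x}, Y)} = {\<pi> \<in> permutations_of_set {1..n}.
      \<exists>p q r s. \<pi> = p @ ?u # q @ ?v # r @ ?w # s \<and>
       (if x = 0 then p = [] else if x = 1 then q = [] else if x = 2 then r = [] else s = [])}"
    unfolding Sn_def
  proof (rule Collect_cong, rule conj_cong[OF HOL.refl])
    fix \<pi> assume "\<pi> \<in> permutations_of_set {1..n}"
    then show "contains \<pi> (\<sigma>, {x}, Y) \<longleftrightarrow> (\<exists>p q r s. \<pi> = p @ ?u # q @ ?v # r @ ?w # s \<and>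
       (if x = 0 then p = [] else if x = 1 then q = [] else if x = 2 then r = [] else s = []))"
      using Ychar2[OF assms(1-3) _ assms(4), of \<pi>] unfolding Sn_def by simp
  qed
  have fin: "finite {1..n}" "card {1..n} = n" by auto
  have "x = 0 \<or> x = 1 \<or> x = 2 \<or> x = 3" using assms(4) by auto
  then show ?thesis
  proof (elim disjE)
    assume x: "x = 0"
    have "{\<pi> \<in> permutations_of_set {1..n}.
      \<exists>p q r s. \<pi> = p @ ?u # q @ ?v # r @ ?w # s \<and>
       (if x = 0 then p = [] else if x = 1 then q = [] else if x = 2 then r = [] else s = [])}
      = {xs \<in> permutations_of_set {1..n}. \<exists>q r s. xs = ?u # q @ ?v # r @ ?w # s}"
      using x by (intro Collect_cong conj_cong[OF HOL.refl]) simp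
    then show ?thesis using eq count_C0[OF fin(1) td(4-6) td(1-3)] fin(2) by simp
  next
    assume x: "x = 1"
    have "{\<pi> \<in> permutations_of_set {1..n}.
      \<exists>p q r s. \<pi> = p @ ?u # q @ ?v # r @ ?w # s \<and>
       (if x = 0 then p = [] else if x = 1 then q = [] else if x = 2 then r = [] else s = [])}
      = {xs \<in> permutations_of_set {1..n}. \<exists>p r s. xs = p @ ?u # ?v # r @ ?w # s}"
      using x by (intro Collect_cong conj_cong[OF HOL.refl]) simp
    then show ?thesis using eq count_C1[OF fin(1) td(4-6) td(1-3)] fin(2) by simp
  next
    assume x: "x = 2"
    have "{\<pi> \<in> permutations_of_set {1..n}.
      \<exists>p q r s. \<pi> = p @ ?u # q @ ?v # r @ ?w # s \<and>
       (if x = 0 then p = [] else if x = 1 then q = [] else if x = 2 then r = [] else s = [])}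
      = {xs \<in> permutations_of_set {1..n}. \<exists>p q s. xs = p @ ?u # q @ ?v # ?w # s}"
      using x by (intro Collect_cong conj_cong[OF HOL.refl]) simp
    then show ?thesis using eq count_C2[OF fin(1) td(4-6) td(1-3)] fin(2) by simp
  next
    assume x: "x = 3"
    have "{\<pi> \<in> permutations_of_set {1..n}.
      \<exists>p q r s. \<pi> = p @ ?u # q @ ?v # r @ ?w # s \<and>
       (if x = 0 then p = [] else if x = 1 then q = [] else if x = 2 then r = [] else s = [])}
      = {xs \<in> permutations_of_set {1..n}. \<exists>p q r. xs = p @ ?u # q @ ?v # r @ [?w]}"
      using x by (intro Collect_cong conj_cong[OF HOL.refl]) simp
    then show ?thesis using eq count_C3[OF fin(1) td(4-6) td(1-3)] fin(2) by simp
  qed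
qed



lemma le3: "Suc 0 \<le> (a::nat) \<Longrightarrow> a \<le> Suc (Suc (Suc 0)) \<Longrightarrow> a = Suc 0 \<or> a = 2 \<or> a = 3" by auto

lemma inv_list_vals:
  "inv_list [1,2,3] = [1,2,3]" "inv_list [1,3,2] = [1,3,2]" "inv_list [2,1,3] = [2,1,3]"
  "inv_list [2,3,1] = [3,1,2]" "inv_list [3,1,2] = [2,3,1]" "inv_list [3,2,1] = [3,2,1]"
  unfolding inv_list_def by (auto simp: upt_rec intro!: the_equality dest!: le3)

definition invp :: "nat list \<Rightarrow> nat list" where
  "invp \<pi> = map (\<lambda>v. Suc (THE i. i < length \<pi> \<and> \<pi>!i = v)) [1..<length \<pi> + 1]"

lemma invp_len: "length (invp \<pi>) = length \<pi>"
  unfolding invp_def length_map length_upt by simp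

lemma invp_nth0: "k < length \<pi> \<Longrightarrow> invp \<pi> ! k = Suc (THE i. i < length \<pi> \<and> \<pi>!i = k + 1)"
  unfolding invp_def by (subst nth_map) (simp_all del: upt_Suc)

lemma the_idx:
  assumes "distinct \<pi>" "j < length \<pi>"
  shows "(THE i. i < length \<pi> \<and> \<pi>!i = \<pi>!j) = j"
  using assms by (auto intro!: the_equality simp: nth_eq_iff_index_eq)

lemma invp_nth:
  assumes "\<pi> \<in> Sn n" "1 \<le> i" "i \<le> n"
  shows "invp \<pi> ! (\<pi>!(i-1) - 1) = i"
proof -
  note f = Sn_facts[OF assms(1)]
  have v: "\<pi>!(i-1) \<in> {1..n}" using Sn_nth[OF assms] .
  have "invp \<pi> ! (\<pi>!(i-1) - 1) = Suc (THE j. j < length \<pi> \<and> \<pi>!j = \<pi>!(i-1))"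
  proof -
    have lt: "\<pi>!(i-1) - 1 < length \<pi>" using v f(1) by auto
    have "\<pi>!(i-1) - 1 + 1 = \<pi>!(i-1)" using v by auto
    then show ?thesis using invp_nth0[OF lt] by simp
  qed
  also have "\<dots> = i" using the_idx[OF f(2), of "i-1"] f(1) assms(2,3) by simp
  finally show ?thesis .
qed

lemma invp_Sn:
  assumes "\<pi> \<in> Sn n"
  shows "invp \<pi> \<in> Sn n"
proof -
  note f = Sn_facts[OF assms]
  have len: "length (invp \<pi>) = n" using invp_len f by simp
  have sub: "{1..n} \<subseteq> set (invp \<pi>)"
  proof
    fix i assume i: "i \<in> {1..n}"
    have v: "\<pi>!(i-1) \<in> {1..n}" using Sn_nth[OF assms] i by auto
    have "invp \<pi> ! (\<pi>!(i-1) - 1) = i" using invp_nth[OF assms] i by auto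
    moreover have "\<pi>!(i-1) - 1 < length (invp \<pi>)" using v len by auto
    ultimately show "i \<in> set (invp \<pi>)" by (metis nth_mem)
  qed
  have c1: "card (set (invp \<pi>)) \<le> n" using len card_length by metis
  have c2: "n \<le> card (set (invp \<pi>))"
    using card_mono[OF _ sub] by simp
  have cn: "card (set (invp \<pi>)) = n" using c1 c2 by simp
  have d: "distinct (invp \<pi>)" using card_distinct[of "invp \<pi>"] cn len by simp
  have "{1..n} = set (invp \<pi>)" using card_subset_eq[OF _ sub] cn by simp
  then have "set (invp \<pi>) = {1..n}" by simp
  then show ?thesis using d unfolding Sn_def permutations_of_set_def by simp
qed

lemma invp_invp:
  assumes "\<pi> \<in> Sn n"
  shows "invp (invp \<pi>) = \<pi>"
proof (rule nth_equalityI)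
  note f = Sn_facts[OF assms]
  have r: "invp \<pi> \<in> Sn n" using invp_Sn[OF assms] .
  show "length (invp (invp \<pi>)) = length \<pi>" using invp_len by simp
  fix k assume k: "k < length (invp (invp \<pi>))"
  then have kn: "k < n" using invp_len f by simp
  have v: "\<pi>!k \<in> {1..n}" using f kn by (metis nth_mem)
  have a: "invp \<pi> ! (\<pi>!k - 1) = k + 1" using invp_nth[OF assms, of "k+1"] kn by simp
  have "invp (invp \<pi>) ! ((invp \<pi>) ! (\<pi>!k - 1) - 1) = \<pi>!k"
    using invp_nth[OF r, of "\<pi>!k"] v by auto
  then show "invp (invp \<pi>) ! k = \<pi> ! k" using a by simp
qed



lemmas inv_list_vals' = inv_list_vals[simplified]

lemma S3L_cases: "\<sigma> \<in> S3L \<Longrightarrow> \<sigma> = [1,2,3] \<or> \<sigma> = [1,3,2] \<or> \<sigma> = [2,1,3] \<or> \<sigma> = [2,3,1] \<or> \<sigma> = [3,1,2] \<or> \<sigma> = [3,2,1]"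
  unfolding S3L_def by auto

lemma inv_S3L: "\<sigma> \<in> S3L \<Longrightarrow> inv_list \<sigma> \<in> S3L"
  by (drule S3L_cases) (auto simp: inv_list_vals inv_list_vals' S3L_def)

lemma inv_inv_S3L: "\<sigma> \<in> S3L \<Longrightarrow> inv_list (inv_list \<sigma>) = \<sigma>"
  by (drule S3L_cases) (auto simp: inv_list_vals inv_list_vals')

lemma len_S3L: "\<sigma> \<in> S3L \<Longrightarrow> length \<sigma> = 3"
  by (drule S3L_cases) auto

lemma inv_transfer:
  assumes \<sigma>: "\<sigma> \<in> S3L" and \<pi>: "\<pi> \<in> Sn n" and X: "X \<subseteq> {0..3}" and Y: "Y \<subseteq> {0..3}"
    and c: "contains \<pi> (\<sigma>, X, Y)"
  shows "contains (invp \<pi>) (inv_list \<sigma>, Y, X)"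
proof -
  let ?\<rho> = "invp \<pi>" and ?s = "inv_list \<sigma>"
  have s: "?s \<in> S3L" using inv_S3L[OF \<sigma>] .
  note f = Sn_facts[OF \<pi>]
  have lr: "length ?\<rho> = n" using invp_len f by simp
  obtain i1 i2 i3 where cd: "cond3 \<pi> \<sigma> X Y i1 i2 i3"
    using contains3[OF len_S3L[OF \<sigma>] X Y] c by blast
  have rng: "1 \<le> i1" "i1 < i2" "i2 < i3" "i3 \<le> n" using cd f unfolding cond3_def by auto
  have iso: "iso3 (\<pi>!(i1-1)) (\<pi>!(i2-1)) (\<pi>!(i3-1)) \<sigma>" using cd unfolding cond3_def by auto
  have Xc: "\<forall>x\<in>X. T4 n i1 i2 i3 (x+1) = T4 n i1 i2 i3 x + 1" using cd f unfolding cond3_def by auto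
  obtain a b c where abc: "a < b" "b < c" "\<pi>!(i1-1) = sel a b c (\<sigma>!0)" "\<pi>!(i2-1) = sel a b c (\<sigma>!1)"
    "\<pi>!(i3-1) = sel a b c (\<sigma>!2)" using iso iso3_S3L[OF \<sigma>] by blast
  have st: "sorted_list_of_set {\<pi>!(i1-1), \<pi>!(i2-1), \<pi>!(i3-1)} = [a,b,c]"
    using sorted_sel[OF \<sigma> abc(1,2)] abc(3-5) by simp
  have Yc: "\<forall>y\<in>Y. T4 n a b c (y+1) = T4 n a b c y + 1"
    using cd f st unfolding cond3_def by (simp add: Let_def)
  have r1: "?\<rho> ! (\<pi>!(i1-1) - 1) = i1" using invp_nth[OF \<pi>] rng by auto
  have r2: "?\<rho> ! (\<pi>!(i2-1) - 1) = i2" using invp_nth[OF \<pi>] rng by auto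
  have r3: "?\<rho> ! (\<pi>!(i3-1) - 1) = i3" using invp_nth[OF \<pi>] rng by auto
  have key: "?\<rho>!(a-1) = sel i1 i2 i3 (?s!0) \<and> ?\<rho>!(b-1) = sel i1 i2 i3 (?s!1) \<and> ?\<rho>!(c-1) = sel i1 i2 i3 (?s!2)"
    using S3L_cases[OF \<sigma>] r1 r2 r3 abc(3-5)
    by (elim disjE; simp add: sel_def inv_list_vals inv_list_vals')
  have iso': "iso3 (?\<rho>!(a-1)) (?\<rho>!(b-1)) (?\<rho>!(c-1)) ?s"
    using iso3_S3L[OF s] key rng(2,3) by blast
  have st': "sorted_list_of_set {?\<rho>!(a-1), ?\<rho>!(b-1), ?\<rho>!(c-1)} = [i1,i2,i3]"
    using sorted_sel[OF s rng(2,3)] key by simp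
  have vr: "\<pi>!(i1-1) \<in> {1..n}" "\<pi>!(i2-1) \<in> {1..n}" "\<pi>!(i3-1) \<in> {1..n}"
    using Sn_nth[OF \<pi>] rng by auto
  have seq: "{\<pi>!(i1-1), \<pi>!(i2-1), \<pi>!(i3-1)} = {a,b,c}" using set_sel[OF \<sigma>] abc(3-5) by simp
  have "a \<in> {\<pi>!(i1-1), \<pi>!(i2-1), \<pi>!(i3-1)}" "c \<in> {\<pi>!(i1-1), \<pi>!(i2-1), \<pi>!(i3-1)}"
    unfolding seq by simp_all
  then have "a \<in> {1..n}" "c \<in> {1..n}" using vr by blast+
  then have ac: "1 \<le> a" "c \<le> n" by auto
  have "cond3 ?\<rho> ?s Y X a b c"
    unfolding cond3_def lr Let_def st' using ac abc(1,2) iso' Yc Xc by simp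
  then show ?thesis using contains3[OF len_S3L[OF s] Y X] by blast
qed

definition FamY :: "bvpat set" where
  "FamY = {(\<sigma>, {x}, Y) | \<sigma> x Y. \<sigma> \<in> S3L \<and> x \<le> 3 \<and> Y \<in> Ys}"

definition FamX :: "bvpat set" where
  "FamX = {(\<sigma>, Y, {x}) | \<sigma> x Y. \<sigma> \<in> S3L \<and> x \<le> 3 \<and> Y \<in> Ys}"

lemma count_FamY:
  assumes "p \<in> FamY" "n \<ge> 3"
  shows "2 * card {\<pi> \<in> Sn n. contains \<pi> p} = fact (n - 1)"
  using assms Ycount unfolding FamY_def by auto

lemma count_FamX:
  assumes "p \<in> FamX" "n \<ge> 3"
  shows "2 * card {\<pi> \<in> Sn n. contains \<pi> p} = fact (n - 1)"
proof -
  obtain \<sigma> x Y where p: "p = (\<sigma>, Y, {x})" "\<sigma> \<in> S3L" "x \<le> 3" "Y \<in> Ys"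
    using assms(1) unfolding FamX_def by blast
  let ?s = "inv_list \<sigma>"
  have s: "?s \<in> S3L" using inv_S3L[OF p(2)] .
  have Ysub: "Y \<subseteq> {0..3}" using p(4) unfolding Ys_def by auto
  have Xsub: "{x} \<subseteq> {0..3}" using p(3) by auto
  have img: "invp ` {\<pi> \<in> Sn n. contains \<pi> p} = {\<rho> \<in> Sn n. contains \<rho> (?s, {x}, Y)}"
  proof
    show "invp ` {\<pi> \<in> Sn n. contains \<pi> p} \<subseteq> {\<rho> \<in> Sn n. contains \<rho> (?s, {x}, Y)}"
      using inv_transfer[OF p(2) _ Ysub Xsub] invp_Sn unfolding p(1) by blast
    show "{\<rho> \<in> Sn n. contains \<rho> (?s, {x}, Y)} \<subseteq> invp ` {\<pi> \<in> Sn n. contains \<pi> p}"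
    proof
      fix \<rho> assume r: "\<rho> \<in> {\<rho> \<in> Sn n. contains \<rho> (?s, {x}, Y)}"
      then have "contains (invp \<rho>) (inv_list ?s, Y, {x})"
        using inv_transfer[OF s _ Xsub Ysub] by blast
      then have "invp \<rho> \<in> {\<pi> \<in> Sn n. contains \<pi> p}"
        using inv_inv_S3L[OF p(2)] invp_Sn r unfolding p(1) by auto
      moreover have "\<rho> = invp (invp \<rho>)" using invp_invp r by auto
      ultimately show "\<rho> \<in> invp ` {\<pi> \<in> Sn n. contains \<pi> p}" by (rule rev_image_eqI)
    qed
  qed
  have inj: "inj_on invp {\<pi> \<in> Sn n. contains \<pi> p}"
    by (rule inj_on_inverseI[where g=invp]) (use invp_invp in blast)
  have "card {\<pi> \<in> Sn n. contains \<pi> p} = card {\<rho> \<in> Sn n. contains \<rho> (?s, {x}, Y)}"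
    using card_image[OF inj] img by simp
  moreover have "(?s, {x}, Y) \<in> FamY" using s p(3,4) unfolding FamY_def by blast
  ultimately show ?thesis using count_FamY assms(2) by simp
qed



lemma S3L_rev: "\<sigma> \<in> S3L \<Longrightarrow> rev \<sigma> \<in> S3L"
  by (drule S3L_cases) (auto simp: S3L_def)

lemma S3L_comp: "\<sigma> \<in> S3L \<Longrightarrow> map (\<lambda>v. length \<sigma> + 1 - v) \<sigma> \<in> S3L"
  by (drule S3L_cases) (auto simp: S3L_def)

lemma img_012: "(\<lambda>y. 3 - y) ` {0,1,2::nat} = {1,2,3}" by auto
lemma img_013: "(\<lambda>y. 3 - y) ` {0,1,3::nat} = {0,2,3}" by auto
lemma img_023: "(\<lambda>y. 3 - y) ` {0,2,3::nat} = {0,1,3}" by auto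
lemma img_123: "(\<lambda>y. 3 - y) ` {1,2,3::nat} = {0,1,2}" by auto

lemma Ys_refl: "Y \<in> Ys \<Longrightarrow> (\<lambda>y. 3 - y) ` Y \<in> Ys"
proof -
  assume "Y \<in> Ys"
  then have "Y = {0,1,2} \<or> Y = {0,1,3} \<or> Y = {0,2,3} \<or> Y = {1,2,3}" unfolding Ys_def by auto
  then show ?thesis
    by (elim disjE; hypsubst; simp only: img_012 img_013 img_023 img_123; simp add: Ys_def)
qed

lemma Fam_closed:
  assumes "q \<in> FamY \<union> FamX"
  shows "pat_inv q \<in> FamY \<union> FamX" "pat_rev q \<in> FamY \<union> FamX" "pat_comp q \<in> FamY \<union> FamX"
proof -
  have "(\<exists>\<sigma> x Y. q = (\<sigma>, {x}, Y) \<and> \<sigma> \<in> S3L \<and> x \<le> 3 \<and> Y \<in> Ys) \<or>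
        (\<exists>\<sigma> x Y. q = (\<sigma>, Y, {x}) \<and> \<sigma> \<in> S3L \<and> x \<le> 3 \<and> Y \<in> Ys)"
    using assms unfolding FamY_def FamX_def by blast
  then have "(pat_inv q \<in> FamY \<union> FamX) \<and> (pat_rev q \<in> FamY \<union> FamX) \<and> (pat_comp q \<in> FamY \<union> FamX)"
  proof (elim disjE exE conjE)
    fix \<sigma> x Y assume h: "q = (\<sigma>, {x}, Y)" "\<sigma> \<in> S3L" "x \<le> 3" "Y \<in> Ys"
    have l: "length \<sigma> = 3" using len_S3L[OF h(2)] .
    have 1: "pat_inv q = (inv_list \<sigma>, Y, {x})" using h(1) unfolding pat_inv_def by simp
    have 2: "pat_rev q = (rev \<sigma>, {3 - x}, Y)" using h(1) l unfolding pat_rev_def by simp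
    have 3: "pat_comp q = (map (\<lambda>v. length \<sigma> + 1 - v) \<sigma>, {x}, (\<lambda>y. 3 - y) ` Y)"
      using h(1) l unfolding pat_comp_def by simp
    show ?thesis unfolding 1 2 3 FamY_def FamX_def
      using inv_S3L[OF h(2)] S3L_rev[OF h(2)] S3L_comp[OF h(2)] Ys_refl[OF h(4)] h(3,4) by auto
  next
    fix \<sigma> x Y assume h: "q = (\<sigma>, Y, {x})" "\<sigma> \<in> S3L" "x \<le> 3" "Y \<in> Ys"
    have l: "length \<sigma> = 3" using len_S3L[OF h(2)] .
    have 1: "pat_inv q = (inv_list \<sigma>, {x}, Y)" using h(1) unfolding pat_inv_def by simp
    have 2: "pat_rev q = (rev \<sigma>, (\<lambda>y. 3 - y) ` Y, {x})" using h(1) l unfolding pat_rev_def by simp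
    have 3: "pat_comp q = (map (\<lambda>v. length \<sigma> + 1 - v) \<sigma>, Y, {3 - x})"
      using h(1) l unfolding pat_comp_def by simp
    show ?thesis unfolding 1 2 3 FamY_def FamX_def
      using inv_S3L[OF h(2)] S3L_rev[OF h(2)] S3L_comp[OF h(2)] Ys_refl[OF h(4)] h(3,4) by auto
  qed
  then show "pat_inv q \<in> FamY \<union> FamX" "pat_rev q \<in> FamY \<union> FamX" "pat_comp q \<in> FamY \<union> FamX"
    by auto
qed

lemma FamY_I: "\<sigma> \<in> S3L \<Longrightarrow> x \<le> 3 \<Longrightarrow> Y \<in> Ys \<Longrightarrow> (\<sigma>, {x}, Y) \<in> FamY \<union> FamX"
  unfolding FamY_def by blast

lemma FamX_I: "\<sigma> \<in> S3L \<Longrightarrow> x \<le> 3 \<Longrightarrow> Y \<in> Ys \<Longrightarrow> (\<sigma>, Y, {x}) \<in> FamY \<union> FamX"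
  unfolding FamX_def by blast

lemma base_Fam: "q \<in> base_patterns \<Longrightarrow> q \<in> FamY \<union> FamX"
  unfolding base_patterns_def
  by (elim insertE emptyE; hypsubst;
      (rule FamY_I; simp add: S3L_def Ys_def; fail)?; (rule FamX_I; simp add: S3L_def Ys_def))

lemma sym_Fam: "p \<in> sym_class q \<Longrightarrow> q \<in> FamY \<union> FamX \<Longrightarrow> p \<in> FamY \<union> FamX"
proof (induction rule: sym_class.induct)
  case refl then show ?case by simp
next
  case (inv r) then show ?case using Fam_closed(1) by blast
next
  case (rev r) then show ?case using Fam_closed(2) by blast
next
  case (comp r) then show ?case using Fam_closed(3) by blast
qed

theorem mainTheorem18:
  fixes p :: bvpat and n :: nat
  assumes "p \<in> (\<Union>q\<in>base_patterns. sym_class q)"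
    and "n \<ge> 3"
  shows "real (avoid_count n p) = fact n - fact (n - 1) / 2"
proof -
  obtain q where q: "q \<in> base_patterns" "p \<in> sym_class q" using assms(1) by blast
  have pF: "p \<in> FamY \<union> FamX" using sym_Fam[OF q(2) base_Fam[OF q(1)]] .
  let ?C = "{\<pi> \<in> Sn n. contains \<pi> p}"
  have C2: "2 * card ?C = fact (n - 1)"
    using pF count_FamY count_FamX assms(2) by blast
  have fin: "finite (Sn n)" unfolding Sn_def by simp
  have cS: "card (Sn n) = fact n" unfolding Sn_def by simp
  have sub: "?C \<subseteq> Sn n" by auto
  have "{\<pi> \<in> Sn n. \<not> contains \<pi> p} = Sn n - ?C" by auto
  then have av: "avoid_count n p = card (Sn n) - card ?C"
    unfolding avoid_count_def using card_Diff_subset[OF finite_subset[OF sub fin] sub] by simp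
  have le: "card ?C \<le> card (Sn n)" using card_mono[OF fin sub] .
  have "real (avoid_count n p) = real (card (Sn n)) - real (card ?C)"
    using av le by simp
  also have "\<dots> = fact n - fact (n - 1) / 2"
  proof -
    have "real (card ?C) = real (fact (n - 1)) / 2" using C2
      by (metis nonzero_mult_div_cancel_left of_nat_mult of_nat_numeral zero_neq_numeral)
    then show ?thesis unfolding cS by simp
  qed
  finally show ?thesis .
qed


end
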